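(* Let $\mathcal{H}$ be a finite-dimensional Hilbert space, $\ket{h}\in\mathcal{H}$ a unit vector, and $W_0,W_1,\ldots,W_l$ subspaces of $\mathcal{H}$. For $0\le j\le l$ let $\epsilon_j:=\|\Pi_{W_j}\ket h\|_2^2$. Let $0<\alpha<1/3$, let $\mathbf{W}_\alpha\le\tilde{\mathcal{H}}$ be the $\alpha$-tilted span of $W_1,\ldots,W_l$, and let $\mathbf{W}:=\mathbf{W}_\alpha+W_0\le\tilde{\mathcal H}$ (with $W_0$ embedded via the identity embedding $\mathcal H\hookrightarrow\tilde{\mathcal H}$). Let $\epsilon:=\frac{1-\alpha}{\alpha}\sum_{j=1}^l\epsilon_j$. Then $$\max\Big\{\epsilon_0,\,(1-\alpha)\max_{1\le j\le l}\epsilon_j\Big\}\ \le\ \|\Pi_{\mathbf W}\ket h\|_2^2\ \le\ \frac{3l}{\alpha}(\epsilon_0+\epsilon).$$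
   Context: Tilted span: Let $\mathcal{H}_1,\ldots,\mathcal{H}_l$ be Hilbert spaces each of dimension $\dim\mathcal{H}$, and $\tilde{\mathcal{H}}:=\mathcal{H}\oplus\mathcal{H}_1\oplus\cdots\oplus\mathcal{H}_l$ (orthogonal direct sum). Let $\mathcal{T}_j$ be a linear map taking $\mathcal{H}$ isometrically onto $\mathcal{H}_j$. For $0<\alpha<1$ define $\mathcal{T}_{j,\alpha}:=\sqrt{1-\alpha}\,\mathbb{1}_{\mathcal{H}}+\sqrt{\alpha}\,\mathcal{T}_j:\mathcal{H}\to\tilde{\mathcal{H}}$, with $\mathbb{1}_{\mathcal H}$ the identity embedding. The $\alpha$-tilted span of subspaces $W_1,\dots,W_l\le\mathcal H$ is $\mathbf{W}_\alpha:=\sum_{j=1}^l\mathcal{T}_{j,\alpha}(W_j)$. $\Pi_X$ denotes orthogonal projection onto $X$. *)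

theory Defs
  imports "HOL-Analysis.Analysis"
begin

text \<open>The finite-dimensional complex Hilbert space H is modelled as complex^'n
 (any finite index type 'n). Its real inner product is Re of the complex inner
 product, so orthogonality coincides with complex orthogonality.\<close>

definition csubspace :: "(complex^'n) set \<Rightarrow> bool" where
  "csubspace W \<longleftrightarrow> 0 \<in> W \<and> (\<forall>x\<in>W. \<forall>y\<in>W. x + y \<in> W) \<and> (\<forall>c. \<forall>x\<in>W. c *s x \<in> W)"

definition clinear_map :: "(complex^'n \<Rightarrow> complex^'n) \<Rightarrow> bool" where
  "clinear_map f \<longleftrightarrow> (\<forall>x y. f (x + y) = f x + f y) \<and> (\<forall>c x. f (c *s x) = c *s f x)"

definition proj :: "(complex^'n) set \<Rightarrow> complex^'n \<Rightarrow> complex^'n" where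
  "proj W h = (THE p. p \<in> W \<and> (\<forall>w\<in>W. inner (h - p) w = 0))"

text \<open>The direct sum H_tilde = H (+) H_1 (+) ... (+) H_l is modelled as functions
 x :: nat => complex^'n with x i = 0 for i > l; slot 0 is H, slot j is H_j.\<close>

definition tspace :: "nat \<Rightarrow> (nat \<Rightarrow> complex^'n) set" where
  "tspace l = {x. \<forall>i>l. x i = 0}"

definition tinner :: "nat \<Rightarrow> (nat \<Rightarrow> complex^'n) \<Rightarrow> (nat \<Rightarrow> complex^'n) \<Rightarrow> real" where
  "tinner l x y = (\<Sum>i\<le>l. inner (x i) (y i))"

definition tnorm :: "nat \<Rightarrow> (nat \<Rightarrow> complex^'n) \<Rightarrow> real" where
  "tnorm l x = sqrt (tinner l x x)"

definition tproj :: "nat \<Rightarrow> (nat \<Rightarrow> complex^'n) set \<Rightarrow> (nat \<Rightarrow> complex^'n) \<Rightarrow> (nat \<Rightarrow> complex^'n)" where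
  "tproj l W x = (THE p. p \<in> W \<and> (\<forall>w\<in>W. tinner l (\<lambda>i. x i - p i) w = 0))"

definition emb :: "complex^'n \<Rightarrow> (nat \<Rightarrow> complex^'n)" where
  "emb h = (\<lambda>i. if i = 0 then h else 0)"

text \<open>T_j = (slot-j embedding) o U_j, where U_j is a unitary on H, so T_j maps H
 isometrically onto H_j. T_{j,alpha} = sqrt(1-alpha) 1_H + sqrt alpha T_j.\<close>
definition Tj :: "(nat \<Rightarrow> complex^'n \<Rightarrow> complex^'n) \<Rightarrow> nat \<Rightarrow> complex^'n \<Rightarrow> (nat \<Rightarrow> complex^'n)" where
  "Tj U j h = (\<lambda>i. if i = j then U j h else 0)"

definition Tja :: "(nat \<Rightarrow> complex^'n \<Rightarrow> complex^'n) \<Rightarrow> nat \<Rightarrow> real \<Rightarrow> complex^'n \<Rightarrow> (nat \<Rightarrow> complex^'n)" where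
  "Tja U j \<alpha> h = (\<lambda>i. sqrt (1 - \<alpha>) *\<^sub>R emb h i + sqrt \<alpha> *\<^sub>R Tj U j h i)"

definition tilted_span :: "(nat \<Rightarrow> complex^'n \<Rightarrow> complex^'n) \<Rightarrow> nat \<Rightarrow> real \<Rightarrow> (nat \<Rightarrow> (complex^'n) set) \<Rightarrow> (nat \<Rightarrow> complex^'n) set" where
  "tilted_span U l \<alpha> W = {(\<lambda>i. \<Sum>j\<in>{1..l}. Tja U j \<alpha> (w j) i) | w. \<forall>j\<in>{1..l}. w j \<in> W j}"

definition tsum :: "(nat \<Rightarrow> complex^'n) set \<Rightarrow> (nat \<Rightarrow> complex^'n) set \<Rightarrow> (nat \<Rightarrow> complex^'n) set" where
  "tsum A B = {(\<lambda>i. a i + b i) | a b. a \<in> A \<and> b \<in> B}"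

end

theory Submission
  imports Defs "HOL-Library.Function_Algebras" "HOL-Analysis.L2_Norm"
begin

instantiation "fun" :: (type, real_vector) real_vector
begin
definition scaleR_fun :: "real \<Rightarrow> ('a \<Rightarrow> 'b) \<Rightarrow> 'a \<Rightarrow> 'b" where "scaleR_fun r f = (\<lambda>x. r *\<^sub>R f x)"
instance by standard (auto simp: scaleR_fun_def fun_eq_iff algebra_simps)
end

lemma scaleR_fun_apply [simp]: "(r *\<^sub>R f) x = r *\<^sub>R f x"
  by (simp add: scaleR_fun_def)

lemma sum_fun_apply: "(sum f A) x = (\<Sum>a\<in>A. f a x)"
  by (induct A rule: infinite_finite_induct) auto

lemma tinner_add_left: "tinner l (x + y) z = tinner l x z + tinner l y z"
  by (simp add: tinner_def inner_add_left sum.distrib)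
lemma tinner_diff_left: "tinner l (x - y) z = tinner l x z - tinner l y z"
  by (simp add: tinner_def inner_diff_left sum_subtractf)
lemma tinner_scaleR_left: "tinner l (r *\<^sub>R x) z = r * tinner l x z"
  by (simp add: tinner_def sum_distrib_left)
lemma tinner_commute: "tinner l x y = tinner l y x"
  by (simp add: tinner_def inner_commute)
lemma tinner_add_right: "tinner l z (x + y) = tinner l z x + tinner l z y"
  by (simp add: tinner_def inner_add_right sum.distrib)
lemma tinner_diff_right: "tinner l z (x - y) = tinner l z x - tinner l z y"
  by (simp add: tinner_def inner_diff_right sum_subtractf)
lemma tinner_scaleR_right: "tinner l z (r *\<^sub>R x) = r * tinner l z x"
  by (simp add: tinner_def sum_distrib_left)
lemma tinner_zero_right [simp]: "tinner l z 0 = 0"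
  by (simp add: tinner_def)

lemma tinner_self: "tinner l x x = (\<Sum>i\<le>l. (norm (x i))\<^sup>2)"
  by (simp add: tinner_def power2_norm_eq_inner)

lemma tinner_self_nonneg: "tinner l x x \<ge> 0"
  by (simp add: tinner_self sum_nonneg)

lemma tinner_self_eq0: "tinner l x x = 0 \<longleftrightarrow> (\<forall>i\<le>l. x i = 0)"
  unfolding tinner_self by (subst sum_nonneg_eq_0_iff) auto

lemma tinner_CS: "tinner l x y \<le> sqrt (tinner l x x) * sqrt (tinner l y y)"
proof -
  have "tinner l x y \<le> (\<Sum>i\<le>l. \<bar>norm (x i)\<bar> * \<bar>norm (y i)\<bar>)"
    unfolding tinner_def by (rule sum_mono) (simp add: Cauchy_Schwarz_ineq2 order_trans[OF abs_ge_self] norm_cauchy_schwarz)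
  also have "\<dots> \<le> L2_set (\<lambda>i. norm (x i)) {..l} * L2_set (\<lambda>i. norm (y i)) {..l}"
    by (rule L2_set_mult_ineq)
  finally show ?thesis by (simp add: L2_set_def tinner_self)
qed

lemma tinner_CS2: "(tinner l x y)\<^sup>2 \<le> tinner l x x * tinner l y y"
proof -
  have "\<bar>tinner l x y\<bar> \<le> sqrt (tinner l x x) * sqrt (tinner l y y)"
    using tinner_CS[of l x y] tinner_CS[of l "-x" y]
    by (simp add: abs_le_iff tinner_def inner_minus_left sum_negf)
  hence "\<bar>tinner l x y\<bar>\<^sup>2 \<le> (sqrt (tinner l x x) * sqrt (tinner l y y))\<^sup>2"
    by (metis power_mono abs_ge_zero)
  thus ?thesis by (simp add: power_mult_distrib tinner_self_nonneg)
qed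

lemma tinner_zero_self_orth: "tinner l u u = 0 \<Longrightarrow> tinner l y u = 0"
proof -
  assume "tinner l u u = 0"
  hence "\<forall>i\<le>l. u i = 0" by (simp only: tinner_self_eq0)
  thus ?thesis by (simp add: tinner_def)
qed

lemma orth_span:
  assumes "\<forall>s\<in>S. tinner l z s = 0" "y \<in> span S"
  shows "tinner l z y = 0"
  using assms(2)
proof (induct rule: span_induct)
  case base
  show ?case by (simp add: subspace_def tinner_add_right tinner_scaleR_right)
next
  case (step x) thus ?case using assms(1) by simp
qed

lemma gram_schmidt:
  assumes "finite S"
  shows "\<exists>p\<in>span S. \<forall>s\<in>S. tinner l (x - p) s = 0"
  using assms
proof (induct S arbitrary: x rule: finite_induct)
  case empty thus ?case by (auto intro: span_zero)
next
  case (insert v S x)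
  obtain p' where p': "p' \<in> span S" "\<forall>s\<in>S. tinner l (x - p') s = 0" using insert(3) by blast
  obtain q where q: "q \<in> span S" "\<forall>s\<in>S. tinner l (v - q) s = 0" using insert(3) by blast
  define u where "u = v - q"
  have sub: "span S \<subseteq> span (insert v S)" by (rule span_mono) auto
  have uS: "\<forall>s\<in>S. tinner l u s = 0" using q u_def by simp
  show ?case
  proof (cases "tinner l u u = 0")
    case True
    have "tinner l (x - p') v = 0"
    proof -
      have "v = u + q" by (simp add: u_def)
      hence "tinner l (x - p') v = tinner l (x - p') u + tinner l (x - p') q"
        by (simp add: tinner_add_right)
      moreover have "tinner l (x - p') u = 0" using True tinner_zero_self_orth by blast
      moreover have "tinner l (x - p') q = 0" using orth_span[OF p'(2) q(1)] .
      ultimately show ?thesis by simp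
    qed
    hence "\<forall>s\<in>insert v S. tinner l (x - p') s = 0" using p'(2) by blast
    thus ?thesis using p'(1) sub by blast
  next
    case False
    define c where "c = tinner l (x - p') u / tinner l u u"
    define p where "p = p' + c *\<^sub>R u"
    have uin: "u \<in> span (insert v S)" unfolding u_def
      by (rule span_diff) (use q sub in \<open>auto intro: span_base\<close>)
    have pin: "p \<in> span (insert v S)" unfolding p_def
      using p' sub uin by (auto intro: span_add span_scale)
    have xp: "x - p = (x - p') - c *\<^sub>R u" by (simp add: p_def)
    have S0: "\<forall>s\<in>S. tinner l (x - p) s = 0"
      using p' uS by (simp add: xp tinner_diff_left tinner_scaleR_left)
    have u0: "tinner l (x - p) u = 0"
      using False by (simp add: xp tinner_diff_left tinner_scaleR_left c_def)
    have "tinner l (x - p) v = 0"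
    proof -
      have "v = u + q" by (simp add: u_def)
      hence "tinner l (x - p) v = tinner l (x - p) u + tinner l (x - p) q"
        by (simp add: tinner_add_right)
      moreover have "tinner l (x - p) q = 0" using orth_span[OF S0 q(1)] .
      ultimately show ?thesis using u0 by simp
    qed
    hence "\<forall>s\<in>insert v S. tinner l (x - p) s = 0" using S0 by blast
    thus ?thesis using pin by blast
  qed
qed

lemma tproj_props:
  assumes "subspace W" "W \<subseteq> tspace l" "finite S" "S \<subseteq> W" "W \<subseteq> span S"
  shows "tproj l W x \<in> W \<and> (\<forall>w\<in>W. tinner l (\<lambda>i. x i - tproj l W x i) w = 0)"
proof -
  obtain p where p: "p \<in> span S" "\<forall>s\<in>S. tinner l (x - p) s = 0"
    using gram_schmidt[OF assms(3)] by blast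
  have pW: "p \<in> W" using p(1) span_minimal[OF assms(4,1)] by blast
  have orth: "\<forall>w\<in>W. tinner l (\<lambda>i. x i - p i) w = 0"
  proof
    fix w assume "w \<in> W"
    hence "tinner l (x - p) w = 0" using orth_span[OF p(2)] assms(5) by blast
    moreover have "x - p = (\<lambda>i. x i - p i)" by (rule ext) simp
    ultimately show "tinner l (\<lambda>i. x i - p i) w = 0" by simp
  qed
  have uniq: "q = p" if "q \<in> W" "\<forall>w\<in>W. tinner l (\<lambda>i. x i - q i) w = 0" for q
  proof -
    have d: "q - p \<in> W" using that(1) pW assms(1) by (simp add: subspace_diff)
    have "tinner l (q - p) (q - p) = tinner l (x - p) (q - p) - tinner l (x - q) (q - p)"
      by (simp add: tinner_diff_left[symmetric])
    also have "\<dots> = 0"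
    proof -
      have "x - p = (\<lambda>i. x i - p i)" "x - q = (\<lambda>i. x i - q i)" by (rule ext, simp)+
      thus ?thesis using orth that(2) d by simp
    qed
    finally have "\<forall>i\<le>l. q i = p i" by (simp add: tinner_self_eq0)
    moreover have "\<forall>i>l. q i = p i"
    proof -
      have "q \<in> tspace l" "p \<in> tspace l" using that(1) pW assms(2) by auto
      thus ?thesis unfolding tspace_def by simp
    qed
    ultimately show ?thesis by (metis ext not_le)
  qed
  have "tproj l W x = p" unfolding tproj_def
    apply (rule the_equality)
    using pW orth apply blast
    using uniq by blast
  thus ?thesis using pW orth by simp
qed



lemma CS_sum:
  fixes f g :: "nat \<Rightarrow> real"
  assumes "\<And>j. f j \<ge> 0" "\<And>j. g j \<ge> 0"
  shows "(\<Sum>j\<in>A. f j * g j) \<le> sqrt (\<Sum>j\<in>A. (f j)\<^sup>2) * sqrt (\<Sum>j\<in>A. (g j)\<^sup>2)"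
  using L2_set_mult_ineq[of f g A] assms by (simp add: L2_set_def)

lemma sq_ineq: "(a + t * b)\<^sup>2 \<le> (1 + b\<^sup>2) * (a\<^sup>2 + t\<^sup>2)" for a t b :: real
proof -
  have "0 \<le> (b * a - t)\<^sup>2" by simp
  thus ?thesis by (simp add: power2_eq_square algebra_simps)
qed

lemma arith_main:
  fixes N \<alpha> e0 n0 :: real and a eps :: "nat \<Rightarrow> real" and l :: nat
  assumes al: "0 < \<alpha>" "\<alpha> < 1/3" and l: "l \<ge> 1" and N: "N \<ge> 0" and e0: "e0 \<ge> 0"
    and a: "\<And>j. a j \<ge> 0" and eps: "\<And>j. eps j \<ge> 0"
    and hN: "N \<le> sqrt (1-\<alpha>) * (\<Sum>j\<in>{1..l}. sqrt (eps j) * a j) + sqrt e0 * n0"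
    and hn0: "n0 \<le> sqrt N + sqrt (1-\<alpha>) * (\<Sum>j\<in>{1..l}. a j)"
    and ha: "\<alpha> * (\<Sum>j\<in>{1..l}. (a j)\<^sup>2) \<le> N"
  shows "N \<le> 3 * real l / \<alpha> * (e0 + (1 - \<alpha>) / \<alpha> * (\<Sum>j\<in>{1..l}. eps j))"
proof -
  define q where "q = sqrt \<alpha>"
  define c where "c = sqrt (1 - \<alpha>)"
  define s where "s = sqrt N"
  define t where "t = sqrt e0"
  define E where "E = (\<Sum>j\<in>{1..l}. eps j)"
  define r where "r = sqrt (\<Sum>j\<in>{1..l}. (a j)\<^sup>2)"
  define L where "L = sqrt (real l)"
  have q: "q > 0" "q\<^sup>2 = \<alpha>" using al by (auto simp: q_def)
  have c: "c \<ge> 0" "c\<^sup>2 = 1 - \<alpha>" using al by (auto simp: c_def)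
  have s: "s \<ge> 0" "s\<^sup>2 = N" using N by (auto simp: s_def)
  have t: "t \<ge> 0" "t\<^sup>2 = e0" using e0 by (auto simp: t_def)
  have E: "E \<ge> 0" unfolding E_def using eps by (simp add: sum_nonneg)
  have r: "r \<ge> 0" "r\<^sup>2 = (\<Sum>j\<in>{1..l}. (a j)\<^sup>2)" by (auto simp: r_def sum_nonneg)
  have L: "L \<ge> 0" "L\<^sup>2 = real l" by (auto simp: L_def)
  have n0: "sqrt e0 * n0 \<le> t * (s + c * (\<Sum>j\<in>{1..l}. a j))"
    using mult_left_mono[OF hn0, of t] t by (simp add: s_def c_def t_def)
  have S1: "(\<Sum>j\<in>{1..l}. sqrt (eps j) * a j) \<le> sqrt E * r"
    using CS_sum[of "\<lambda>j. sqrt (eps j)" a "{1..l}"] a eps by (simp add: E_def r_def)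
  have S2: "(\<Sum>j\<in>{1..l}. a j) \<le> L * r"
    using CS_sum[of "\<lambda>j. 1" a "{1..l}"] a by (simp add: L_def r_def)
  have qr: "q * r \<le> s"
  proof -
    have "(q * r)\<^sup>2 = q\<^sup>2 * r\<^sup>2" by (rule power_mult_distrib)
    also have "\<dots> \<le> s\<^sup>2" using ha by (simp only: q(2) r(2) s(2))
    finally have "(q * r)\<^sup>2 \<le> s\<^sup>2" .
    thus ?thesis by (rule power2_le_imp_le[OF _ s(1)])
  qed
  have N1: "N \<le> c * sqrt E * r + t * (s + c * L * r)"
  proof -
    have 1: "c * (\<Sum>j\<in>{1..l}. sqrt (eps j) * a j) \<le> c * (sqrt E * r)"
      by (rule mult_left_mono[OF S1 c(1)])
    have 2: "t * (s + c * (\<Sum>j\<in>{1..l}. a j)) \<le> t * (s + c * (L * r))"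
      using S2 c t by (intro mult_left_mono add_left_mono) auto
    have "N \<le> c * (sqrt E * r) + t * (s + c * (L * r))"
      using hN[folded c_def] n0 1 2 by linarith
    thus ?thesis by (simp add: algebra_simps)
  qed
  define X where "X = c * sqrt E + t * (q + c * L)"
  have N2: "q * N \<le> s * X"
  proof -
    have "q * N \<le> c * sqrt E * (q * r) + t * (q * s + c * L * (q * r))"
      using mult_left_mono[OF N1, of q] q by (simp add: algebra_simps)
    also have "\<dots> \<le> c * sqrt E * s + t * (q * s + c * L * s)"
      using qr c t L E q
      by (intro add_mono mult_left_mono mult_nonneg_nonneg) auto
    also have "\<dots> = s * X" by (simp add: X_def algebra_simps)
    finally show ?thesis .
  qed
  have X0: "X \<ge> 0" unfolding X_def using c t q L E by simp
  have aN: "\<alpha> * N \<le> X\<^sup>2"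
  proof (cases "s = 0")
    case True thus ?thesis using s X0 by simp
  next
    case False
    hence "q * s \<le> X" using N2 s by (simp add: power2_eq_square flip: s(2))
    hence "(q * s)\<^sup>2 \<le> X\<^sup>2" using q s by (simp add: power_mono)
    thus ?thesis using q s by (simp add: power_mult_distrib)
  qed
  have B: "(q + c * L)\<^sup>2 \<le> 2 * (\<alpha> + (1 - \<alpha>) * real l)"
  proof -
    have "0 \<le> (q - c * L)\<^sup>2" by simp
    hence "(q + c * L)\<^sup>2 \<le> 2 * (q\<^sup>2 + c\<^sup>2 * L\<^sup>2)"
      by (simp add: power2_eq_square algebra_simps)
    thus ?thesis by (simp only: q(2) c(2) L(2))
  qed
  have "X\<^sup>2 \<le> (1 + (q + c * L)\<^sup>2) * ((c * sqrt E)\<^sup>2 + t\<^sup>2)"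
    unfolding X_def by (rule sq_ineq)
  also have "\<dots> \<le> (1 + 2 * (\<alpha> + (1 - \<alpha>) * real l)) * ((1 - \<alpha>) * E + e0)"
  proof -
    have eq: "(c * sqrt E)\<^sup>2 + t\<^sup>2 = (1-\<alpha>) * E + e0" using c t E by (simp add: power_mult_distrib)
    have "0 \<le> (1-\<alpha>) * E + e0" using al E e0 by simp
    thus ?thesis unfolding eq using B by (intro mult_right_mono) auto
  qed
  also have "\<dots> \<le> 3 * real l * (e0 + (1 - \<alpha>) / \<alpha> * E)"
  proof -
    have k: "1 + 2 * (\<alpha> + (1 - \<alpha>) * real l) \<le> 3 * real l"
    proof -
      have m: "\<alpha> * 1 \<le> \<alpha> * real l" using al l by (intro mult_left_mono) auto
      have "1 + 2 * (\<alpha> + (1 - \<alpha>) * real l) = 1 + 2*\<alpha> + 2*real l - 2*(\<alpha>*real l)"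
        by (simp add: algebra_simps)
      thus ?thesis using m al l by linarith
    qed
    have "(1 + 2 * (\<alpha> + (1 - \<alpha>) * real l)) * ((1 - \<alpha>) * E + e0)
        \<le> 3 * real l * ((1 - \<alpha>) * E + e0)"
      using k al E e0 by (intro mult_right_mono) auto
    also have "\<dots> \<le> 3 * real l * (e0 + (1 - \<alpha>) / \<alpha> * E)"
    proof -
      have "(1 - \<alpha>) * E \<le> (1 - \<alpha>) / \<alpha> * E"
      proof -
        have "(1-\<alpha>) * \<alpha> \<le> (1-\<alpha>) * 1" using al by (intro mult_left_mono) auto
        hence "(1-\<alpha>) \<le> (1-\<alpha>)/\<alpha>" using al by (simp add: le_divide_eq)
        thus ?thesis using E by (rule mult_right_mono)
      qed
      thus ?thesis by (intro mult_left_mono) auto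
    qed
    finally show ?thesis .
  qed
  finally have "\<alpha> * N \<le> 3 * real l * (e0 + (1 - \<alpha>) / \<alpha> * E)" using aN by linarith
  thus ?thesis using al by (simp add: E_def field_simps)
qed



lemma scaleR_as_vec: "r *\<^sub>R (x::complex^'n) = (complex_of_real r) *s x"
  unfolding vec_eq_iff vector_scaleR_component vector_smult_component by (simp add: scaleR_conv_of_real)

lemma csub_sub: "csubspace (W::(complex^'n) set) \<Longrightarrow> subspace W"
  unfolding csubspace_def subspace_def by (simp add: scaleR_as_vec)

lemma clin_lin: "clinear_map (f::complex^'n \<Rightarrow> complex^'n) \<Longrightarrow> linear f"
  unfolding clinear_map_def by (intro linearI) (simp_all add: scaleR_as_vec)

lemma proj_props:
  fixes V :: "(complex^'n) set"
  assumes "subspace V"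
  shows "proj V h \<in> V \<and> (\<forall>w\<in>V. inner (h - proj V h) w = 0)"
proof -
  obtain y z where yz: "y \<in> span V" "\<And>w. w \<in> span V \<Longrightarrow> orthogonal z w" "h = y + z"
    using orthogonal_subspace_decomp_exists[of V h] by metis
  have sp: "span V = V" using assms by (simp add: span_eq_iff)
  have yV: "y \<in> V" using yz(1) sp by simp
  have orth: "\<forall>w\<in>V. inner (h - y) w = 0" using yz sp by (simp add: orthogonal_def)
  have uniq: "q = y" if "q \<in> V" "\<forall>w\<in>V. inner (h - q) w = 0" for q
  proof -
    have d: "q - y \<in> V" using that(1) yV assms by (simp add: subspace_diff)
    have "inner (q - y) (q - y) = inner (h - y) (q - y) - inner (h - q) (q - y)"
      by (simp add: inner_diff_left)
    also have "\<dots> = 0" using orth that(2) d by simp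
    finally show ?thesis by simp
  qed
  have "proj V h = y" unfolding proj_def
    apply (rule the_equality)
    using yV orth apply blast
    using uniq by blast
  thus ?thesis using yV orth by simp
qed

lemma Tja_linear: "linear (U j) \<Longrightarrow> linear (Tja U j \<alpha>)"
  by (intro linearI) (auto simp: fun_eq_iff Tja_def emb_def Tj_def linear_add linear_scale algebra_simps)

lemma Tja_zero: "linear (U j) \<Longrightarrow> Tja U j \<alpha> 0 = 0"
  by (rule linear_0[OF Tja_linear])

lemma emb_linear: "linear emb"
  by (intro linearI) (auto simp: fun_eq_iff emb_def)

lemma Wt_iff:
  "x \<in> tsum (tilted_span U l \<alpha> W) (emb ` W 0) \<longleftrightarrow>
   (\<exists>w. (\<forall>j\<in>{1..l}. w j \<in> W j) \<and> w 0 \<in> W 0 \<and> x = (\<Sum>j\<in>{1..l}. Tja U j \<alpha> (w j)) + emb (w 0))"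
proof
  assume "x \<in> tsum (tilted_span U l \<alpha> W) (emb ` W 0)"
  then obtain w w0 where w: "\<forall>j\<in>{1..l}. w j \<in> W j" "w0 \<in> W 0"
    and x: "x = (\<lambda>i. (\<Sum>j\<in>{1..l}. Tja U j \<alpha> (w j) i) + emb w0 i)"
    unfolding tsum_def tilted_span_def by blast
  let ?w = "w(0 := w0)"
  have "x = (\<Sum>j\<in>{1..l}. Tja U j \<alpha> (?w j)) + emb (?w 0)"
    by (rule ext) (simp add: x sum_fun_apply)
  moreover have "(\<forall>j\<in>{1..l}. ?w j \<in> W j) \<and> ?w 0 \<in> W 0" using w by simp
  ultimately show "\<exists>w. (\<forall>j\<in>{1..l}. w j \<in> W j) \<and> w 0 \<in> W 0 \<and> x = (\<Sum>j\<in>{1..l}. Tja U j \<alpha> (w j)) + emb (w 0)"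
    by blast
next
  assume "\<exists>w. (\<forall>j\<in>{1..l}. w j \<in> W j) \<and> w 0 \<in> W 0 \<and> x = (\<Sum>j\<in>{1..l}. Tja U j \<alpha> (w j)) + emb (w 0)"
  then obtain w where w: "\<forall>j\<in>{1..l}. w j \<in> W j" "w 0 \<in> W 0"
    and x: "x = (\<Sum>j\<in>{1..l}. Tja U j \<alpha> (w j)) + emb (w 0)" by blast
  have "x = (\<lambda>i. (\<lambda>i. \<Sum>j\<in>{1..l}. Tja U j \<alpha> (w j) i) i + emb (w 0) i)"
    by (rule ext) (simp add: x sum_fun_apply)
  moreover have "(\<lambda>i. \<Sum>j\<in>{1..l}. Tja U j \<alpha> (w j) i) \<in> tilted_span U l \<alpha> W"
    unfolding tilted_span_def using w(1) by blast
  moreover have "emb (w 0) \<in> emb ` W 0" using w(2) by blast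
  ultimately show "x \<in> tsum (tilted_span U l \<alpha> W) (emb ` W 0)"
    unfolding tsum_def
    by (intro CollectI exI[of _ "\<lambda>i. \<Sum>j\<in>{1..l}. Tja U j \<alpha> (w j) i"] exI[of _ "emb (w 0)"]) simp
qed

lemma Wt_single:
  assumes lin: "\<forall>j\<in>{1..l}. linear (U j)" and sub: "\<forall>j\<le>l. subspace (W j)"
    and j: "j \<in> {1..l}" and b: "b \<in> W j"
  shows "Tja U j \<alpha> b \<in> tsum (tilted_span U l \<alpha> W) (emb ` W 0)"
proof -
  let ?w = "\<lambda>k. if k = j then b else 0"
  have "(\<Sum>k\<in>{1..l}. Tja U k \<alpha> (?w k)) = (\<Sum>k\<in>{1..l}. if k = j then Tja U j \<alpha> b else 0)"
    by (rule sum.cong) (use lin in \<open>auto simp: Tja_zero\<close>)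
  also have "\<dots> = Tja U j \<alpha> b" using j by simp
  finally have e: "Tja U j \<alpha> b = (\<Sum>k\<in>{1..l}. Tja U k \<alpha> (?w k)) + emb (?w 0)"
    using j emb_linear linear_0 by fastforce
  have "\<forall>k\<in>{1..l}. ?w k \<in> W k" using b sub by (auto intro!: subspace_0)
  moreover have "?w 0 \<in> W 0" using j sub by (auto intro!: subspace_0)
  ultimately show ?thesis unfolding Wt_iff using e by (intro exI[of _ ?w]) blast
qed

lemma Wt_emb:
  assumes lin: "\<forall>j\<in>{1..l}. linear (U j)" and sub: "\<forall>j\<le>l. subspace (W j)"
    and b: "b \<in> W 0"
  shows "emb b \<in> tsum (tilted_span U l \<alpha> W) (emb ` W 0)"
proof -
  let ?w = "\<lambda>k. if k = 0 then b else 0"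
  have "(\<Sum>k\<in>{1..l}. Tja U k \<alpha> (?w k)) = 0"
    by (rule sum.neutral) (use lin in \<open>auto simp: Tja_zero\<close>)
  hence e: "emb b = (\<Sum>k\<in>{1..l}. Tja U k \<alpha> (?w k)) + emb (?w 0)" by simp
  have "\<forall>k\<in>{1..l}. ?w k \<in> W k" using sub by (auto intro!: subspace_0)
  moreover have "?w 0 \<in> W 0" using b by auto
  ultimately show ?thesis unfolding Wt_iff using e by (intro exI[of _ ?w]) blast
qed

lemma Wt_subspace:
  fixes W :: "nat \<Rightarrow> (complex^'n) set"
  assumes lin: "\<forall>j\<in>{1..l}. linear (U j)" and sub: "\<forall>j\<le>l. subspace (W j)"
  shows "subspace (tsum (tilted_span U l \<alpha> W) (emb ` W 0))"
  unfolding subspace_def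
proof (intro conjI ballI allI)
  show "0 \<in> tsum (tilted_span U l \<alpha> W) (emb ` W 0)"
  proof -
    have "emb (0::complex^'n) = 0" by (simp add: emb_def fun_eq_iff)
    moreover have "0 \<in> W 0" using sub by (auto intro!: subspace_0)
    ultimately show ?thesis using Wt_emb[OF lin sub, of 0 \<alpha>] by simp
  qed
next
  fix x y assume "x \<in> tsum (tilted_span U l \<alpha> W) (emb ` W 0)" "y \<in> tsum (tilted_span U l \<alpha> W) (emb ` W 0)"
  then obtain w v where w: "\<forall>j\<in>{1..l}. w j \<in> W j" "w 0 \<in> W 0" "x = (\<Sum>j\<in>{1..l}. Tja U j \<alpha> (w j)) + emb (w 0)"
    and v: "\<forall>j\<in>{1..l}. v j \<in> W j" "v 0 \<in> W 0" "y = (\<Sum>j\<in>{1..l}. Tja U j \<alpha> (v j)) + emb (v 0)"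
    unfolding Wt_iff by blast
  have "x + y = (\<Sum>j\<in>{1..l}. Tja U j \<alpha> ((w + v) j)) + emb ((w + v) 0)"
  proof -
    have s: "(\<Sum>j\<in>{1..l}. Tja U j \<alpha> ((w + v) j)) = (\<Sum>j\<in>{1..l}. Tja U j \<alpha> (w j)) + (\<Sum>j\<in>{1..l}. Tja U j \<alpha> (v j))"
      unfolding sum.distrib[symmetric] by (rule sum.cong) (use lin in \<open>auto simp: linear_add[OF Tja_linear]\<close>)
    show ?thesis by (simp only: s w(3) v(3)) (simp add: linear_add[OF emb_linear] algebra_simps)
  qed
  moreover have "\<forall>j\<in>{1..l}. (w + v) j \<in> W j" "(w + v) 0 \<in> W 0"
    using w v sub by (auto intro: subspace_add)
  ultimately show "x + y \<in> tsum (tilted_span U l \<alpha> W) (emb ` W 0)" unfolding Wt_iff by blast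
next
  fix c x assume "x \<in> tsum (tilted_span U l \<alpha> W) (emb ` W 0)"
  then obtain w where w: "\<forall>j\<in>{1..l}. w j \<in> W j" "w 0 \<in> W 0" "x = (\<Sum>j\<in>{1..l}. Tja U j \<alpha> (w j)) + emb (w 0)"
    unfolding Wt_iff by blast
  have "c *\<^sub>R x = (\<Sum>j\<in>{1..l}. Tja U j \<alpha> ((c *\<^sub>R w) j)) + emb ((c *\<^sub>R w) 0)"
  proof -
    have s: "(\<Sum>j\<in>{1..l}. Tja U j \<alpha> ((c *\<^sub>R w) j)) = c *\<^sub>R (\<Sum>j\<in>{1..l}. Tja U j \<alpha> (w j))"
      unfolding scaleR_sum_right by (rule sum.cong) (use lin in \<open>auto simp: linear_scale[OF Tja_linear]\<close>)
    show ?thesis by (simp only: s w(3)) (simp add: linear_scale[OF emb_linear] scaleR_add_right)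
  qed
  moreover have "\<forall>j\<in>{1..l}. (c *\<^sub>R w) j \<in> W j" "(c *\<^sub>R w) 0 \<in> W 0"
    using w sub by (auto intro: subspace_scale)
  ultimately show "c *\<^sub>R x \<in> tsum (tilted_span U l \<alpha> W) (emb ` W 0)" unfolding Wt_iff by blast
qed

lemma Wt_tspace:
  "tsum (tilted_span U l \<alpha> W) (emb ` W 0) \<subseteq> tspace l"
proof
  fix x assume "x \<in> tsum (tilted_span U l \<alpha> W) (emb ` W 0)"
  then obtain w where x: "x = (\<Sum>j\<in>{1..l}. Tja U j \<alpha> (w j)) + emb (w 0)"
    unfolding Wt_iff by blast
  show "x \<in> tspace l" unfolding tspace_def
    by (auto simp: x sum_fun_apply Tja_def emb_def Tj_def intro!: sum.neutral)
qed

lemma Wt_findim: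
  assumes lin: "\<forall>j\<in>{1..l}. linear (U j)" and sub: "\<forall>j\<le>l. subspace (W j)"
  shows "\<exists>S. finite S \<and> S \<subseteq> tsum (tilted_span U l \<alpha> W) (emb ` W 0) \<and> tsum (tilted_span U l \<alpha> W) (emb ` W 0) \<subseteq> span S"
proof -
  have "\<forall>j. \<exists>B. B \<subseteq> W j \<and> independent B \<and> W j \<subseteq> span B"
    by (meson basis_exists)
  then obtain B where B: "\<And>j. B j \<subseteq> W j" "\<And>j. independent (B j)" "\<And>j. W j \<subseteq> span (B j)"
    by metis
  define S where "S = (\<Union>j\<in>{1..l}. Tja U j \<alpha> ` B j) \<union> emb ` B 0"
  have fin: "finite S" unfolding S_def using B(2) finiteI_independent by auto
  have SW: "S \<subseteq> tsum (tilted_span U l \<alpha> W) (emb ` W 0)"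
    unfolding S_def using B(1) Wt_single[OF lin sub] Wt_emb[OF lin sub] by blast
  have "tsum (tilted_span U l \<alpha> W) (emb ` W 0) \<subseteq> span S"
  proof
    fix x assume "x \<in> tsum (tilted_span U l \<alpha> W) (emb ` W 0)"
    then obtain w where w: "\<forall>j\<in>{1..l}. w j \<in> W j" "w 0 \<in> W 0" "x = (\<Sum>j\<in>{1..l}. Tja U j \<alpha> (w j)) + emb (w 0)"
      unfolding Wt_iff by blast
    have "Tja U j \<alpha> (w j) \<in> span S" if j: "j \<in> {1..l}" for j
    proof -
      have "Tja U j \<alpha> (w j) \<in> Tja U j \<alpha> ` span (B j)" using w(1) B(3) j by blast
      also have "\<dots> = span (Tja U j \<alpha> ` B j)" using lin j Tja_linear linear_span_image by metis
      also have "\<dots> \<subseteq> span S" unfolding S_def by (rule span_mono) (use j in blast)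
      finally show ?thesis .
    qed
    moreover have "emb (w 0) \<in> span S"
    proof -
      have "emb (w 0) \<in> emb ` span (B 0)" using w(2) B(3) by blast
      also have "\<dots> = span (emb ` B 0)" using emb_linear linear_span_image by metis
      also have "\<dots> \<subseteq> span S" unfolding S_def by (rule span_mono) blast
      finally show ?thesis .
    qed
    ultimately show "x \<in> span S" unfolding w(3) by (intro span_add span_sum) auto
  qed
  thus ?thesis using fin SW by blast
qed



lemma real_aux: fixes x N c :: real assumes "x \<ge> 0" "c * x\<^sup>2 \<le> N * x" "N \<ge> 0" shows "c * x \<le> N"
proof (cases "x = 0")
  case True thus ?thesis using assms by simp
next
  case False
  hence "x > 0" using assms by simp
  hence "(c * x) * x \<le> N * x" using assms(2) by (simp add: power2_eq_square mult.assoc)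
  thus ?thesis using \<open>x > 0\<close> by simp
qed

theorem corollary1:
  fixes h :: "complex^'n" and W :: "nat \<Rightarrow> (complex^'n) set"
    and U :: "nat \<Rightarrow> complex^'n \<Rightarrow> complex^'n"
    and l :: nat and \<alpha> :: real and \<epsilon> :: "nat \<Rightarrow> real"
  assumes "norm h = 1"
    and "l \<ge> 1"
    and "\<forall>j\<le>l. csubspace (W j)"
    and "\<forall>j\<in>{1..l}. clinear_map (U j) \<and> surj (U j) \<and> (\<forall>x. norm (U j x) = norm x)"
    and "\<forall>j\<le>l. \<epsilon> j = (norm (proj (W j) h))\<^sup>2"
    and "0 < \<alpha>" and "\<alpha> < 1/3"
  shows "max (\<epsilon> 0) ((1 - \<alpha>) * Max (\<epsilon> ` {1..l}))
           \<le> (tnorm l (tproj l (tsum (tilted_span U l \<alpha> W) (emb ` W 0)) (emb h)))\<^sup>2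
       \<and> (tnorm l (tproj l (tsum (tilted_span U l \<alpha> W) (emb ` W 0)) (emb h)))\<^sup>2
           \<le> 3 * real l / \<alpha> * (\<epsilon> 0 + (1 - \<alpha>) / \<alpha> * (\<Sum>j\<in>{1..l}. \<epsilon> j))"
proof -
  have sub: "\<forall>j\<le>l. subspace (W j)" using assms(3) csub_sub by blast
  have lin: "\<forall>j\<in>{1..l}. linear (U j)" using assms(4) clin_lin by blast
  have iso: "\<And>j x. j \<in> {1..l} \<Longrightarrow> norm (U j x) = norm x" using assms(4) by blast
  have al: "0 < \<alpha>" "\<alpha> < 1/3" using assms by auto
  define Wt where "Wt = tsum (tilted_span U l \<alpha> W) (emb ` W 0)"
  define e where "e = emb h"
  define P where "P = tproj l Wt e"
  obtain S where S: "finite S" "S \<subseteq> Wt" "Wt \<subseteq> span S"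
    using Wt_findim[OF lin sub, of \<alpha>] unfolding Wt_def by blast
  have PP: "P \<in> Wt \<and> (\<forall>w\<in>Wt. tinner l (\<lambda>i. e i - P i) w = 0)"
    unfolding P_def
    by (rule tproj_props[OF _ _ S]) (unfold Wt_def, rule Wt_subspace[OF lin sub], rule Wt_tspace)
  have PW: "P \<in> Wt" using PP by blast
  have eP: "tinner l e w = tinner l P w" if "w \<in> Wt" for w
  proof -
    have "e - P = (\<lambda>i. e i - P i)" by (rule ext) simp
    hence "tinner l (e - P) w = 0" using PP that by simp
    thus ?thesis by (simp add: tinner_diff_left)
  qed
  define N where "N = tinner l P P"
  have N0: "N \<ge> 0" by (simp add: N_def tinner_self_nonneg)
  have tn: "(tnorm l P)\<^sup>2 = N" by (simp add: tnorm_def N_def tinner_self_nonneg)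
  have NeP: "N = tinner l e P" using eP[OF PW] by (simp add: N_def)
  have LB: "(tinner l e y)\<^sup>2 \<le> N * tinner l y y" if "y \<in> Wt" for y
    using eP[OF that] tinner_CS2[of l P y] by (simp add: N_def)
  define p where "p j = proj (W j) h" for j
  have pp: "p j \<in> W j \<and> (\<forall>w\<in>W j. inner (h - p j) w = 0)" if "j \<le> l" for j
    using proj_props sub that unfolding p_def by blast
  have hp: "inner h w = inner (p j) w" if "j \<le> l" "w \<in> W j" for j w
    using pp[OF that(1)] that(2) by (simp add: inner_diff_left)
  have hpp: "inner h (p j) = (norm (p j))\<^sup>2" if "j \<le> l" for j
    using hp[OF that] pp[OF that] by (simp add: power2_norm_eq_inner)
  have eps: "\<epsilon> j = (norm (p j))\<^sup>2" if "j \<le> l" for j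
    using assms(5) that unfolding p_def by blast
  have tin_emb: "tinner l (emb a) z = inner a (z 0)" for a z
  proof -
    have "tinner l (emb a) z = (\<Sum>i\<le>l. if i = 0 then inner a (z 0) else 0)"
      unfolding tinner_def emb_def by (rule sum.cong) auto
    thus ?thesis by simp
  qed
  have tin_split: "tinner l x y = inner (x 0) (y 0) + (\<Sum>i\<in>{1..l}. inner (x i) (y i))" for x y
  proof -
    have "{..l} = insert 0 {1..l}" by auto
    thus ?thesis unfolding tinner_def by simp
  qed
  have Tja0: "Tja U j \<alpha> x 0 = sqrt (1-\<alpha>) *\<^sub>R x" if "j \<in> {1..l}" for j x
    using that by (simp add: Tja_def emb_def Tj_def)
  have Tjai: "Tja U j \<alpha> x i = (if i = j then sqrt \<alpha> *\<^sub>R U j x else 0)" if "i \<in> {1..l}" for j x i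
    using that by (simp add: Tja_def emb_def Tj_def)
  have lb0: "\<epsilon> 0 \<le> N"
  proof -
    define y where "y = emb (p 0)"
    have p0: "p 0 \<in> W 0" using pp[of 0] by simp
    have yW: "y \<in> Wt" unfolding y_def Wt_def by (rule Wt_emb[OF lin sub p0])
    have y0: "y 0 = p 0" by (simp add: y_def emb_def)
    have "tinner l e y = inner h (y 0)" unfolding e_def by (rule tin_emb)
    also have "\<dots> = (norm (p 0))\<^sup>2" using hpp[of 0] y0 by simp
    finally have "tinner l e y = (norm (p 0))\<^sup>2" .
    moreover have "tinner l y y = (norm (p 0))\<^sup>2"
      unfolding y_def tin_emb by (simp add: emb_def dot_square_norm)
    ultimately have "1 * ((norm (p 0))\<^sup>2)\<^sup>2 \<le> N * (norm (p 0))\<^sup>2" using LB[OF yW] by simp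
    hence "1 * (norm (p 0))\<^sup>2 \<le> N" using real_aux[of "(norm (p 0))\<^sup>2" 1 N] N0 by simp
    thus ?thesis using eps[of 0] by simp
  qed
  have lbj: "(1 - \<alpha>) * \<epsilon> j \<le> N" if j: "j \<in> {1..l}" for j
  proof -
    have jl: "j \<le> l" using j by simp
    define y where "y = Tja U j \<alpha> (p j)"
    have pj: "p j \<in> W j" using pp[OF jl] by simp
    have yW: "y \<in> Wt" unfolding y_def Wt_def by (rule Wt_single[OF lin sub j pj])
    have "tinner l e y = sqrt (1-\<alpha>) * (norm (p j))\<^sup>2"
    proof -
      have "tinner l e y = inner h (y 0)" unfolding e_def by (rule tin_emb)
      also have "\<dots> = sqrt (1-\<alpha>) * (norm (p j))\<^sup>2" using hpp[OF jl] Tja0[OF j] by (simp add: y_def)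
      finally show ?thesis .
    qed
    moreover have "tinner l y y = (norm (p j))\<^sup>2"
    proof -
      have "(\<Sum>i\<in>{1..l}. inner (y i) (y i)) = (\<Sum>i\<in>{1..l}. if i = j then \<alpha> * (norm (p j))\<^sup>2 else 0)"
        by (rule sum.cong) (use al iso[OF j] in \<open>auto simp: y_def Tjai power2_norm_eq_inner[symmetric] power_mult_distrib\<close>)
      also have "\<dots> = \<alpha> * (norm (p j))\<^sup>2" using j by simp
      finally have s: "(\<Sum>i\<in>{1..l}. inner (y i) (y i)) = \<alpha> * (norm (p j))\<^sup>2" .
      have "inner (y 0) (y 0) = (1 - \<alpha>) * (norm (p j))\<^sup>2"
        using al by (simp add: y_def Tja0[OF j] power2_norm_eq_inner[symmetric] power_mult_distrib)
      thus ?thesis using s by (simp add: tin_split algebra_simps)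
    qed
    ultimately have "(1 - \<alpha>) * ((norm (p j))\<^sup>2)\<^sup>2 \<le> N * (norm (p j))\<^sup>2"
      using LB[OF yW] al by (simp add: power_mult_distrib)
    hence "(1 - \<alpha>) * (norm (p j))\<^sup>2 \<le> N" using real_aux[of "(norm (p j))\<^sup>2" "1 - \<alpha>" N] N0 by simp
    thus ?thesis using eps[OF jl] by simp
  qed
  have lower: "max (\<epsilon> 0) ((1 - \<alpha>) * Max (\<epsilon> ` {1..l})) \<le> N"
  proof -
    have "Max (\<epsilon> ` {1..l}) \<in> \<epsilon> ` {1..l}" using assms(2) by (intro Max_in) auto
    then obtain j where "j \<in> {1..l}" "Max (\<epsilon> ` {1..l}) = \<epsilon> j" by auto
    thus ?thesis using lbj lb0 by simp
  qed
  obtain w where w: "\<forall>j\<in>{1..l}. w j \<in> W j" "w 0 \<in> W 0"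
    "P = (\<Sum>j\<in>{1..l}. Tja U j \<alpha> (w j)) + emb (w 0)"
    using PW unfolding Wt_def Wt_iff by blast
  have P0: "P 0 = (\<Sum>j\<in>{1..l}. sqrt (1-\<alpha>) *\<^sub>R w j) + w 0"
  proof -
    have "(\<Sum>j\<in>{1..l}. Tja U j \<alpha> (w j) 0) = (\<Sum>j\<in>{1..l}. sqrt (1-\<alpha>) *\<^sub>R w j)"
      by (rule sum.cong) (simp_all add: Tja0)
    thus ?thesis by (simp add: w(3) sum_fun_apply emb_def)
  qed
  have Pi: "P i = sqrt \<alpha> *\<^sub>R U i (w i)" if i: "i \<in> {1..l}" for i
  proof -
    have "P i = (\<Sum>j\<in>{1..l}. if i = j then sqrt \<alpha> *\<^sub>R U j (w j) else 0)"
      using i by (simp add: w(3) sum_fun_apply Tjai emb_def)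
    also have "\<dots> = sqrt \<alpha> *\<^sub>R U i (w i)" using i by (simp add: sum.delta)
    finally show ?thesis .
  qed
  have Nsplit: "N = (norm (P 0))\<^sup>2 + \<alpha> * (\<Sum>j\<in>{1..l}. (norm (w j))\<^sup>2)"
  proof -
    have "(\<Sum>i\<in>{1..l}. inner (P i) (P i)) = (\<Sum>i\<in>{1..l}. \<alpha> * (norm (w i))\<^sup>2)"
      by (rule sum.cong) (use al iso in \<open>auto simp: Pi power2_norm_eq_inner[symmetric] power_mult_distrib\<close>)
    thus ?thesis by (simp add: N_def tin_split power2_norm_eq_inner sum_distrib_left)
  qed
  have ha: "\<alpha> * (\<Sum>j\<in>{1..l}. (norm (w j))\<^sup>2) \<le> N" using Nsplit by simp
  have P0N: "norm (P 0) \<le> sqrt N"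
  proof (rule real_le_rsqrt)
    have "0 \<le> \<alpha> * (\<Sum>j\<in>{1..l}. (norm (w j))\<^sup>2)" using al by (intro mult_nonneg_nonneg sum_nonneg) auto
    thus "(norm (P 0))\<^sup>2 \<le> N" using Nsplit by linarith
  qed
  have hN: "N \<le> sqrt (1-\<alpha>) * (\<Sum>j\<in>{1..l}. sqrt ((norm (p j))\<^sup>2) * norm (w j)) + sqrt ((norm (p 0))\<^sup>2) * norm (w 0)"
  proof -
    have "N = inner h (P 0)" using NeP by (simp add: e_def tin_emb)
    also have "\<dots> = sqrt (1-\<alpha>) * (\<Sum>j\<in>{1..l}. inner h (w j)) + inner h (w 0)"
      by (simp add: P0 inner_add_right inner_sum_right sum_distrib_left)
    also have "\<dots> = sqrt (1-\<alpha>) * (\<Sum>j\<in>{1..l}. inner (p j) (w j)) + inner (p 0) (w 0)"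
    proof -
      have "(\<Sum>j\<in>{1..l}. inner h (w j)) = (\<Sum>j\<in>{1..l}. inner (p j) (w j))"
        by (rule sum.cong) (use hp w(1) in auto)
      moreover have "inner h (w 0) = inner (p 0) (w 0)" using hp[of 0 "w 0"] w(2) by simp
      ultimately show ?thesis by simp
    qed
    also have "\<dots> \<le> sqrt (1-\<alpha>) * (\<Sum>j\<in>{1..l}. sqrt ((norm (p j))\<^sup>2) * norm (w j)) + sqrt ((norm (p 0))\<^sup>2) * norm (w 0)"
      using al by (intro add_mono mult_left_mono sum_mono) (auto intro: norm_cauchy_schwarz)
    finally show ?thesis .
  qed
  have hn0: "norm (w 0) \<le> sqrt N + sqrt (1-\<alpha>) * (\<Sum>j\<in>{1..l}. norm (w j))"
  proof -
    have w0e: "w 0 = P 0 - (\<Sum>j\<in>{1..l}. sqrt (1-\<alpha>) *\<^sub>R w j)" by (simp add: P0)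
    have "norm (w 0) \<le> norm (P 0) + norm (\<Sum>j\<in>{1..l}. sqrt (1-\<alpha>) *\<^sub>R w j)"
      by (subst w0e) (rule norm_triangle_ineq4)
    also have "\<dots> \<le> sqrt N + (\<Sum>j\<in>{1..l}. norm (sqrt (1-\<alpha>) *\<^sub>R w j))"
      using P0N norm_sum[of "\<lambda>j. sqrt (1-\<alpha>) *\<^sub>R w j" "{1..l}"] by (rule add_mono)
    also have "\<dots> = sqrt N + sqrt (1-\<alpha>) * (\<Sum>j\<in>{1..l}. norm (w j))"
      using al by (simp add: sum_distrib_left)
    finally show ?thesis .
  qed
  have upper: "N \<le> 3 * real l / \<alpha> * ((norm (p 0))\<^sup>2 + (1 - \<alpha>) / \<alpha> * (\<Sum>j\<in>{1..l}. (norm (p j))\<^sup>2))"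
    by (rule arith_main[OF al assms(2) N0 _ _ _ hN hn0 ha]) auto
  have "(\<Sum>j\<in>{1..l}. \<epsilon> j) = (\<Sum>j\<in>{1..l}. (norm (p j))\<^sup>2)"
    by (rule sum.cong) (auto simp: eps)
  hence upper': "N \<le> 3 * real l / \<alpha> * (\<epsilon> 0 + (1 - \<alpha>) / \<alpha> * (\<Sum>j\<in>{1..l}. \<epsilon> j))"
    using upper eps[of 0] by simp
  show ?thesis using lower upper' tn unfolding P_def Wt_def e_def by simp
qed


thm_deps corollary1

end
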